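(* Let $G$ be a supergraceful graph with $p$ nodes and $q$ edges having a node $u$ of degree $p-1$, and suppose $G$ has a total labeling $\varphi$ with $\varphi(u) = p+q$. Then there exists a total labeling $\mu$ of $G$ such that $1 \in N(\mu)$.
   Context: Graphs are finite, simple. For a labeling $\varphi: V(G) \to \mathbb{Z}_{>0}$ let $N(\varphi) = \{\varphi(x) : x \in V(G)\}$ and $E(\varphi) = \{|\varphi(x)-\varphi(y)| : xy \in E(G)\}$. A total labeling of a graph $G$ with $p$ nodes and $q$ edges is a map $\varphi$ such that the $p$ node labels and the $q$ edge labels are pairwise distinct and $N(\varphi) \cup E(\varphi) = \{1,\dots,p+q\}$; $G$ is supergraceful if it admits a total labeling. *)

theory Defs
  imports Main
begin

definition simple_graph :: "'a set \<Rightarrow> 'a set set \<Rightarrow> bool" where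
  "simple_graph V E \<longleftrightarrow> finite V \<and>
     (\<forall>e\<in>E. \<exists>x y. x \<in> V \<and> y \<in> V \<and> x \<noteq> y \<and> e = {x, y})"

definition degree :: "'a set set \<Rightarrow> 'a \<Rightarrow> nat" where
  "degree E u = card {e \<in> E. u \<in> e}"

definition edge_label :: "('a \<Rightarrow> nat) \<Rightarrow> 'a set \<Rightarrow> nat" where
  "edge_label \<phi> e = (THE d. \<exists>x y. e = {x, y} \<and> d = nat \<bar>int (\<phi> x) - int (\<phi> y)\<bar>)"

definition node_labels :: "'a set \<Rightarrow> ('a \<Rightarrow> nat) \<Rightarrow> nat set" where
  "node_labels V \<phi> = \<phi> ` V"

definition edge_labels :: "'a set set \<Rightarrow> ('a \<Rightarrow> nat) \<Rightarrow> nat set" where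
  "edge_labels E \<phi> = edge_label \<phi> ` E"

definition total_labeling :: "'a set \<Rightarrow> 'a set set \<Rightarrow> ('a \<Rightarrow> nat) \<Rightarrow> bool" where
  "total_labeling V E \<phi> \<longleftrightarrow>
     (\<forall>x\<in>V. 0 < \<phi> x) \<and>
     inj_on \<phi> V \<and> inj_on (edge_label \<phi>) E \<and>
     node_labels V \<phi> \<inter> edge_labels E \<phi> = {} \<and>
     node_labels V \<phi> \<union> edge_labels E \<phi> = {1 .. card V + card E}"

definition supergraceful :: "'a set \<Rightarrow> 'a set set \<Rightarrow> bool" where
  "supergraceful V E \<longleftrightarrow> (\<exists>\<phi>. total_labeling V E \<phi>)"

end

theory Submission
  imports Defs
begin

lemma el: "edge_label f {x,y} = nat \<bar>int (f x) - int (f y)\<bar>"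
  unfolding edge_label_def
  by (rule the_equality) (auto simp: doubleton_eq_iff)

lemma card_trick:
  assumes fin: "finite V" "finite E"
    and U: "f ` V \<union> g ` E = {1..card V + card E}"
  shows "inj_on f V \<and> inj_on g E \<and> f ` V \<inter> g ` E = {}"
proof -
  have a: "card (f ` V) \<le> card V" by (rule card_image_le[OF fin(1)])
  have b: "card (g ` E) \<le> card E" by (rule card_image_le[OF fin(2)])
  have c: "card (f ` V) + card (g ` E) = card (f ` V \<union> g ` E) + card (f ` V \<inter> g ` E)"
    using card_Un_Int fin by blast
  have d: "card (f ` V \<union> g ` E) = card V + card E" using U by simp
  have e: "card (f ` V) = card V" "card (g ` E) = card E" "card (f ` V \<inter> g ` E) = 0"
    using a b c d by linarith+
  have "finite (f ` V \<inter> g ` E)" using fin by blast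
  then show ?thesis using e fin by (simp add: inj_on_iff_eq_card)
qed

theorem corollary8p3:
  fixes V :: "'a set" and E :: "'a set set" and u :: 'a and \<phi> :: "'a \<Rightarrow> nat"
  assumes "simple_graph V E"
    and "supergraceful V E"
    and "u \<in> V"
    and "degree E u = card V - 1"
    and "total_labeling V E \<phi>"
    and "\<phi> u = card V + card E"
  shows "\<exists>\<mu>. total_labeling V E \<mu> \<and> 1 \<in> node_labels V \<mu>"
proof -
  define N where "N = card V + card E"
  have finV: "finite V" using assms(1) by (simp add: simple_graph_def)
  have edge: "\<And>e. e \<in> E \<Longrightarrow> \<exists>x y. x \<in> V \<and> y \<in> V \<and> x \<noteq> y \<and> e = {x, y}"
    using assms(1) by (simp add: simple_graph_def)
  have Esub: "E \<subseteq> Pow V"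
  proof
    fix e assume "e \<in> E"
    then obtain x y where "x \<in> V" "y \<in> V" "e = {x, y}" using edge by blast
    then show "e \<in> Pow V" by simp
  qed
  have finE: "finite E" using finV Esub by (meson finite_Pow_iff finite_subset)
  have tl: "(\<forall>x\<in>V. 0 < \<phi> x)" "inj_on \<phi> V" "inj_on (edge_label \<phi>) E"
     "\<phi> ` V \<inter> edge_label \<phi> ` E = {}" "\<phi> ` V \<union> edge_label \<phi> ` E = {1..N}"
    using assms(5) unfolding total_labeling_def node_labels_def edge_labels_def N_def by auto
  have phiN: "\<And>x. x \<in> V \<Longrightarrow> 1 \<le> \<phi> x \<and> \<phi> x \<le> N" using tl(5) by auto
  have uN: "\<phi> u = N" using assms(6) N_def by simp
  have philtN: "\<And>x. x \<in> V \<Longrightarrow> x \<noteq> u \<Longrightarrow> \<phi> x < N"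
    using phiN tl(2) uN assms(3) by (metis inj_on_def le_neq_implies_less)
  show ?thesis
  proof (cases "1 \<in> \<phi> ` V")
    case True
    then show ?thesis using assms(5) by (auto simp: node_labels_def)
  next
    case False
    have N2: "N \<ge> 2" 
    proof (rule ccontr)
      assume "\<not> N \<ge> 2"
      then have "\<phi> u \<le> 1" using uN by simp
      then have "\<phi> u = 1" using phiN[OF assms(3)] by simp
      then show False using False assms(3) by (metis image_eqI)
    qed
    have "N - 1 \<in> \<phi> ` V"
    proof -
      have "N - 1 \<in> \<phi> ` V \<union> edge_label \<phi> ` E" using tl(5) N2 by auto
      moreover have "N - 1 \<notin> edge_label \<phi> ` E"
      proof
        assume "N - 1 \<in> edge_label \<phi> ` E"
        then obtain x y where xy: "x \<in> V" "y \<in> V" "N - 1 = nat \<bar>int (\<phi> x) - int (\<phi> y)\<bar>"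
        proof -
          obtain e where "e \<in> E" "N - 1 = edge_label \<phi> e" using \<open>N - 1 \<in> edge_label \<phi> ` E\<close> by blast
          then obtain x y where "x \<in> V" "y \<in> V" "e = {x,y}" using edge by blast
          then show ?thesis using that \<open>N - 1 = edge_label \<phi> e\<close> by (simp add: el)
        qed
        then have "\<phi> x = 1 \<or> \<phi> y = 1" using phiN[OF xy(1)] phiN[OF xy(2)] by linarith
        then show False using False xy by (metis image_eqI)
      qed
      ultimately show ?thesis by blast
    qed
    then obtain w where w: "w \<in> V" "\<phi> w = N - 1" by auto
    have wu: "w \<noteq> u" using w uN N2 by auto
    define \<mu> where "\<mu> x = (if x = u then N else N - \<phi> x)" for x
    define Eu where "Eu = {e \<in> E. u \<in> e}"
    have Eu_sub: "Eu \<subseteq> (\<lambda>x. {u,x}) ` (V - {u})"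
    proof
      fix e assume "e \<in> Eu"
      then obtain x y where "x \<in> V" "y \<in> V" "x \<noteq> y" "e = {x, y}" "u \<in> e"
        using edge Eu_def by blast
      then show "e \<in> (\<lambda>x. {u,x}) ` (V - {u})" by auto
    qed
    have injU: "inj_on (\<lambda>x. {u,x}) (V - {u})"
      by (auto simp: inj_on_def doubleton_eq_iff)
    have "card ((\<lambda>x. {u,x}) ` (V - {u})) = card V - 1"
      using card_image[OF injU] assms(3) finV by simp
    moreover have "card Eu = card V - 1" using assms(4) by (simp add: degree_def Eu_def)
    ultimately have Eu_eq: "Eu = (\<lambda>x. {u,x}) ` (V - {u})"
      using Eu_sub card_subset_eq finV by (metis finite_Diff finite_imageI)
    have Esplit: "E = Eu \<union> (E - Eu)" using Eu_def by blast
    have Eo_mu: "\<And>e. e \<in> E - Eu \<Longrightarrow> edge_label \<mu> e = edge_label \<phi> e"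
    proof -
      fix e assume "e \<in> E - Eu"
      then obtain x y where "x \<in> V" "y \<in> V" "x \<noteq> y" "e = {x, y}" "x \<noteq> u" "y \<noteq> u"
        using edge Eu_def by blast
      moreover have "\<phi> x < N" "\<phi> y < N" using philtN \<open>x \<in> V\<close> \<open>y \<in> V\<close> \<open>x \<noteq> u\<close> \<open>y \<noteq> u\<close> by auto
      ultimately show "edge_label \<mu> e = edge_label \<phi> e"
        by (simp add: el \<mu>_def of_nat_diff abs_minus_commute)
    qed
    have Eu_mu: "\<And>x. x \<in> V - {u} \<Longrightarrow> edge_label \<mu> {u,x} = \<phi> x"
    proof -
      fix x assume "x \<in> V - {u}"
      then have "\<phi> x < N" using philtN by auto
      then show "edge_label \<mu> {u,x} = \<phi> x" using \<open>x \<in> V - {u}\<close> by (simp add: el \<mu>_def of_nat_diff)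
    qed
    have Eu_phi: "\<And>x. x \<in> V - {u} \<Longrightarrow> edge_label \<phi> {u,x} = N - \<phi> x"
    proof -
      fix x assume "x \<in> V - {u}"
      then have "\<phi> x < N" using philtN by auto
      then show "edge_label \<phi> {u,x} = N - \<phi> x" using uN by (simp add: el)
    qed
    have Vsplit: "V = insert u (V - {u})" using assms(3) by blast
    have muV: "\<mu> ` V = insert N ((\<lambda>x. N - \<phi> x) ` (V - {u}))"
      by (subst Vsplit) (auto simp: \<mu>_def)
    have phiV: "\<phi> ` V = insert N (\<phi> ` (V - {u}))"
      by (subst Vsplit) (auto simp: uN)
    have muE: "edge_label \<mu> ` E = \<phi> ` (V - {u}) \<union> edge_label \<phi> ` (E - Eu)"
    proof -
      have "edge_label \<mu> ` E = edge_label \<mu> ` Eu \<union> edge_label \<mu> ` (E - Eu)"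
        using Esplit by (metis image_Un)
      also have "edge_label \<mu> ` Eu = \<phi> ` (V - {u})"
        unfolding Eu_eq image_image using Eu_mu by (rule image_cong[OF refl])
      also have "edge_label \<mu> ` (E - Eu) = edge_label \<phi> ` (E - Eu)"
        using Eo_mu by (rule image_cong[OF refl])
      finally show ?thesis .
    qed
    have phiE: "edge_label \<phi> ` E = (\<lambda>x. N - \<phi> x) ` (V - {u}) \<union> edge_label \<phi> ` (E - Eu)"
    proof -
      have "edge_label \<phi> ` E = edge_label \<phi> ` Eu \<union> edge_label \<phi> ` (E - Eu)"
        using Esplit by (metis image_Un)
      also have "edge_label \<phi> ` Eu = (\<lambda>x. N - \<phi> x) ` (V - {u})"
        unfolding Eu_eq image_image using Eu_phi by (rule image_cong[OF refl])
      finally show ?thesis .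
    qed
    have U: "\<mu> ` V \<union> edge_label \<mu> ` E = {1..card V + card E}"
      using tl(5) unfolding muV muE N_def[symmetric] phiV phiE by blast
    have pos: "\<forall>x\<in>V. 0 < \<mu> x" using philtN N2 by (auto simp: \<mu>_def)
    have "total_labeling V E \<mu>"
      using card_trick[OF finV finE U] pos U
      unfolding total_labeling_def node_labels_def edge_labels_def by blast
    moreover have "1 \<in> node_labels V \<mu>"
      unfolding node_labels_def using w wu N2 by (auto simp: \<mu>_def intro!: image_eqI[of _ _ w])
    ultimately show ?thesis by blast
  qed
qed

end
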